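(* Let $0<q<1/2$ and $p=1-q$. Let $T_1,T_2,\dots$ be i.i.d. exponential random variables with rate $\alpha>0$, $S_n=T_1+\dots+T_n$, and let $(N'(t))_{t\ge0}$ be a Poisson process with rate $\alpha'>0$ independent of the $T_i$, with $\alpha/(\alpha+\alpha')=p$, $\alpha'/(\alpha+\alpha')=q$. For an integer $z\ge 1$ define $$P(z)=\mathbb P[N'(S_z)\ge z]+\sum_{k=0}^{z-1}\mathbb P[N'(S_z)=k]\left(\frac qp\right)^{z-k}.$$ Then $$P(z)=1-\sum_{k=0}^{z-1}\left(p^zq^k-q^zp^k\right)\binom{k+z-1}{k}.$$
   Context: $P(z)$ is the probability of success of a double-spend attack by attackers with relative hash power $q$ after the honest miners (relative hash power $p$) have mined $z$ blocks: $S_z$ is the time of the $z$-th honest block, $N'(t)$ is the number of attacker blocks by time $t$, and $(q/p)^m$ is the probability that attackers lagging $m$ blocks behind ever catch up. *)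

theory Defs
  imports "HOL-Probability.Probability"
begin

text \<open>Paths: N 0 = 0, nondecreasing, right-continuous (counting process; hence N t = 0 for t \<le> 0).\<close>

definition poisson_process :: "'a measure \<Rightarrow> real \<Rightarrow> (real \<Rightarrow> 'a \<Rightarrow> nat) \<Rightarrow> bool" where
  "poisson_process M r N \<longleftrightarrow>
     (\<forall>t. N t \<in> measurable M (count_space UNIV)) \<and>
     (\<forall>\<omega>\<in>space M. N 0 \<omega> = 0 \<and> mono (\<lambda>t. N t \<omega>) \<and>
         (\<forall>t. continuous (at_right t) (\<lambda>s. real (N s \<omega>)))) \<and>
     (\<forall>n (t :: nat \<Rightarrow> real). 0 \<le> t 0 \<and> (\<forall>i<n. t i \<le> t (Suc i)) \<longrightarrow>
         prob_space.indep_vars M (\<lambda>_. count_space UNIV)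
           (\<lambda>i \<omega>. N (t (Suc i)) \<omega> - N (t i) \<omega>) {..<n}) \<and>
     (\<forall>s t k. 0 \<le> s \<and> s \<le> t \<longrightarrow>
         measure M {\<omega>\<in>space M. N t \<omega> - N s \<omega> = k}
           = exp (- r * (t - s)) * (r * (t - s)) ^ k / fact k)"

text \<open>Success probability P(z) of the double-spend attack; T i is T_(i+1) of the paper,
  so S_z = T 0 + ... + T (z-1).\<close>

definition attack_prob ::
  "'a measure \<Rightarrow> (nat \<Rightarrow> 'a \<Rightarrow> real) \<Rightarrow> (real \<Rightarrow> 'a \<Rightarrow> nat) \<Rightarrow> real \<Rightarrow> real \<Rightarrow> nat \<Rightarrow> real" where
  "attack_prob M T N p q z =
     measure M {\<omega>\<in>space M. N (\<Sum>i<z. T i \<omega>) \<omega> \<ge> z}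
     + (\<Sum>k<z. measure M {\<omega>\<in>space M. N (\<Sum>i<z. T i \<omega>) \<omega> = k} * (q / p) ^ (z - k))"

end

theory Submission imports Defs begin
lemma erlang_integral_one:
  assumes "0 < l"
  shows "(LINT x|lborel. erlang_density k l x) = 1"
proof -
  interpret prob_space "density lborel (\<lambda>x. ennreal (erlang_density k l x))"
    using prob_space_erlang_density[OF assms] .
  have "integral\<^sup>L (density lborel (\<lambda>x. ennreal (erlang_density k l x))) (\<lambda>_. 1::real) = 1"
    using prob_space by (simp add: integral_const)
  then show ?thesis
    using assms by (subst (asm) integral_density) auto
qed

lemma erlang_poisson_integral:
  fixes a b :: real and z k :: nat
  assumes "0 < a" "0 < b" "1 \<le> z"
  shows "(LINT s|lborel. erlang_density (z-1) a s * (exp (- b * s) * (b * s) ^ k / fact k))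
        = real ((k + z - 1) choose k) * (a/(a+b))^z * (b/(a+b))^k"
proof -
  define c where "c = a^z * b^k * fact (k+z-1) / (fact (z-1) * fact k * (a+b)^(k+z))"
  have pt: "erlang_density (z-1) a s * (exp (- b * s) * (b * s) ^ k / fact k)
        = c * erlang_density (k+z-1) (a+b) s" for s
  proof (cases "s < 0")
    case True then show ?thesis by (simp add: erlang_density_def)
  next
    case False
    have z: "Suc (z-1) = z" "Suc (k+z-1) = k+z" "k + z - 1 = k + (z-1)" using assms by auto
    have e: "exp (- a * s) * exp (- b * s) = exp (- (a+b) * s)"
      by (simp add: exp_add[symmetric] algebra_simps)
    show ?thesis using False assms
      unfolding erlang_density_def c_def z
      apply (simp add: power_mult_distrib power_add e[symmetric])
      apply (simp add: field_simps)
      apply (simp add: power_add exp_diff exp_minus field_simps)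
      by (metis (no_types) One_nat_def power_add z(3))
  qed
  have "(LINT s|lborel. erlang_density (z-1) a s * (exp (- b * s) * (b * s) ^ k / fact k))
      = (LINT s|lborel. c * erlang_density (k+z-1) (a+b) s)"
    using pt by simp
  also have "\<dots> = c" using erlang_integral_one[of "a+b" "k+z-1"] assms by simp
  also have "c = real ((k + z - 1) choose k) * (a/(a+b))^z * (b/(a+b))^k"
  proof -
    have "real ((k + z - 1) choose k) = fact (k+z-1) / (fact k * fact (z-1))"
      using assms by (subst binomial_fact) auto
    then show ?thesis unfolding c_def using assms
      by (simp add: power_divide power_add field_simps)
  qed
  finally show ?thesis .
qed

lemma dn_bounds:
  fixes s :: real assumes "0 \<le> s"
  shows "s \<le> real (nat \<lceil>2^n * s\<rceil>) / 2^n" "real (nat \<lceil>2^n * s\<rceil>) / 2^n < s + (1/2)^n"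
proof -
  have c: "real (nat \<lceil>2^n * s\<rceil>) = real_of_int \<lceil>2^n * s\<rceil>"
    using assms by simp
  have "2^n * s \<le> real_of_int \<lceil>2^n * s\<rceil>" by linarith
  then show "s \<le> real (nat \<lceil>2^n * s\<rceil>) / 2^n" unfolding c by (simp add: field_simps)
  have "real_of_int \<lceil>2^n * s\<rceil> < 2^n * s + 1" by linarith
  then show "real (nat \<lceil>2^n * s\<rceil>) / 2^n < s + (1/2)^n" unfolding c
    by (simp add: field_simps power_divide)
qed

lemma dn_nonneg: "0 \<le> real (nat \<lceil>2^n * s\<rceil>) / 2^n"
  by simp

lemma dn_tendsto:
  fixes s :: real assumes "0 \<le> s"
  shows "(\<lambda>n. real (nat \<lceil>2^n * s\<rceil>) / 2^n) \<longlonglongrightarrow> s"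
proof (rule tendsto_sandwich[of "\<lambda>n. s" _ _ "\<lambda>n. s + (1/2)^n"])
  show "\<forall>\<^sub>F n in sequentially. s \<le> real (nat \<lceil>2^n * s\<rceil>) / 2^n"
    using dn_bounds[OF assms] by auto
  show "\<forall>\<^sub>F n in sequentially. real (nat \<lceil>2^n * s\<rceil>) / 2^n \<le> s + (1/2)^n"
    using less_imp_le[OF dn_bounds(2)[OF assms]] by simp
  show "(\<lambda>n. s + (1/2)^n) \<longlonglongrightarrow> s"
    using tendsto_add[OF tendsto_const LIMSEQ_power_zero[of "1/2::real"]] by simp
qed simp

lemma rc_eventually:
  fixes f :: "real \<Rightarrow> nat" and s :: real
  assumes "mono f" "continuous (at_right s) (\<lambda>t. real (f t))" "0 \<le> s"
  shows "eventually (\<lambda>n. f (real (nat \<lceil>2^n * s\<rceil>) / 2^n) = f s) sequentially"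
proof -
  have "((\<lambda>t. real (f t)) \<longlongrightarrow> real (f s)) (at_right s)"
    using assms(2) by (simp add: continuous_within)
  then have "eventually (\<lambda>t. dist (real (f t)) (real (f s)) < 1) (at_right s)"
    by (rule tendstoD) simp
  then obtain b where b: "b > s" "\<And>y. y > s \<Longrightarrow> y < b \<Longrightarrow> dist (real (f y)) (real (f s)) < 1"
    unfolding eventually_at_right_field by blast
  have eq: "f y = f s" if "s < y" "y < b" for y
  proof -
    have "\<bar>real (f y) - real (f s)\<bar> < 1" using b(2)[OF that] by (simp add: dist_real_def)
    then show ?thesis by linarith
  qed
  obtain n0 where n0: "(1/2::real)^n0 < b - s"
    using real_arch_pow_inv[of "b - s" "1/2"] b by auto
  show ?thesis
  proof (rule eventually_sequentiallyI[of n0])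
    fix n assume "n0 \<le> n"
    then have "(1/2::real)^n \<le> (1/2)^n0" by (rule power_decreasing) auto
    then have lt: "real (nat \<lceil>2^n * s\<rceil>) / 2^n < b" using dn_bounds(2)[OF assms(3), of n] n0 by linarith
    have ge: "s \<le> real (nat \<lceil>2^n * s\<rceil>) / 2^n" using dn_bounds(1)[OF assms(3)] .
    show "f (real (nat \<lceil>2^n * s\<rceil>) / 2^n) = f s"
      using eq[OF _ lt] ge by (cases "s = real (nat \<lceil>2^n * s\<rceil>) / 2^n") auto
  qed
qed

theorem mainTheorem3:
  fixes M :: "'a measure" and T :: "nat \<Rightarrow> 'a \<Rightarrow> real" and N :: "real \<Rightarrow> 'a \<Rightarrow> nat"
    and \<alpha> \<alpha>' p q :: real and z :: nat
  assumes "prob_space M"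
    and "0 < \<alpha>" and "0 < \<alpha>'"
    and "0 < q" and "q < 1/2" and "p = 1 - q"
    and "p = \<alpha> / (\<alpha> + \<alpha>')" and "q = \<alpha>' / (\<alpha> + \<alpha>')"
    and "prob_space.indep_vars M (\<lambda>_. borel) T UNIV"
    and "\<And>i. distributed M lborel (T i) (exponential_density \<alpha>)"
    and "poisson_process M \<alpha>' N"
    and "prob_space.indep_set M
           {(\<lambda>\<omega> (i::nat). T i \<omega>) -` A \<inter> space M | A. A \<in> sets (PiM UNIV (\<lambda>_. borel))}
           {(\<lambda>\<omega> (t::real). N t \<omega>) -` B \<inter> space M | B.
              B \<in> sets (PiM UNIV (\<lambda>_. count_space (UNIV :: nat set)))}"
    and "1 \<le> z"
  shows "attack_prob M T N p q z
           = 1 - (\<Sum>k<z. (p ^ z * q ^ k - q ^ z * p ^ k) * real ((k + z - 1) choose k))"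
proof -
  interpret prob_space M by fact
  note pp = assms(11)[unfolded poisson_process_def]
  have Nmeas: "\<And>t. N t \<in> measurable M (count_space UNIV)" using pp by blast
  have N0: "\<And>\<omega>. \<omega> \<in> space M \<Longrightarrow> N 0 \<omega> = 0" using pp by blast
  have Nmono: "\<And>\<omega>. \<omega> \<in> space M \<Longrightarrow> mono (\<lambda>t. N t \<omega>)" using pp by blast
  have Nrc: "\<And>\<omega> t. \<omega> \<in> space M \<Longrightarrow> continuous (at_right t) (\<lambda>s. real (N s \<omega>))" using pp by blast
  have Ninc: "\<And>s t k. 0 \<le> s \<Longrightarrow> s \<le> t \<Longrightarrow> measure M {\<omega>\<in>space M. N t \<omega> - N s \<omega> = k}
           = exp (- \<alpha>' * (t - s)) * (\<alpha>' * (t - s)) ^ k / fact k" using pp by blast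
  define S where "S = (\<lambda>\<omega>. \<Sum>i<z. T i \<omega>)"
  define F where "F = (\<lambda>(k::nat) (t::real). exp (- \<alpha>' * t) * (\<alpha>' * t) ^ k / fact k)"
  define P where "P = (PiM UNIV (\<lambda>_::nat. count_space (UNIV::nat set)))"
  define Y where "Y = (\<lambda>(n::nat) \<omega> (j::nat). N (real j / 2^n) \<omega>)"
  define D where "D = distr M borel S"
  define dn where "dn = (\<lambda>(n::nat) (s::real). real (nat \<lceil>2^n * s\<rceil>) / 2^n)"
  have Ndist: "measure M {\<omega>\<in>space M. N t \<omega> = k} = F k t" if "0 \<le> t" for t k
  proof -
    have "{\<omega>\<in>space M. N t \<omega> = k} = {\<omega>\<in>space M. N t \<omega> - N 0 \<omega> = k}" using N0 by auto
    then show ?thesis using Ninc[of 0 t k] that unfolding F_def by simp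
  qed
  have Tmeas: "\<And>i. T i \<in> borel_measurable M"
    using assms(10) distributed_measurable by (metis measurable_lborel1)
  have Smeas: "S \<in> borel_measurable M" unfolding S_def using Tmeas by measurable
  have Sdist: "distributed M lborel S (erlang_density (z-1) \<alpha>)"
  proof -
    have "distributed M lborel (\<lambda>x. \<Sum>i\<in>{..<z}. T i x) (erlang_density (card {..<z} - 1) \<alpha>)"
      using assms(1,2,10,13) indep_vars_subset[OF assms(9)]
      by (intro exponential_distributed_sum) (auto simp: lessThan_empty_iff)
    then show ?thesis unfolding S_def by simp
  qed
  have D_eq: "D = density lborel (erlang_density (z-1) \<alpha>)"
  proof -
    have "D = distr M lborel S" unfolding D_def by (rule distr_cong) auto
    then show ?thesis using distributed_distr_eq_density[OF Sdist] by simp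
  qed
  interpret D: prob_space D unfolding D_def using Smeas by (rule prob_space_distr)
  have Spos: "AE \<omega> in M. 0 \<le> S \<omega>"
  proof -
    have "AE s in D. 0 \<le> s"
      unfolding D_eq by (subst AE_density) (auto simp: erlang_density_def intro!: AE_I2)
    then show ?thesis unfolding D_def by (rule AE_distrD[OF Smeas])
  qed
  have Ymeas: "Y n \<in> measurable M P" for n
    unfolding Y_def P_def
    by (rule measurable_PiM_single') (auto simp: Nmeas space_PiM)
  have prodeq: "distr M borel S \<Otimes>\<^sub>M distr M P (Y n) = distr M (borel \<Otimes>\<^sub>M P) (\<lambda>\<omega>. (S \<omega>, Y n \<omega>))" for n
  proof -
    let ?A = "{S -` A \<inter> space M |A. A \<in> sets borel}"
    let ?B = "{Y n -` A \<inter> space M |A. A \<in> sets P}"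
    let ?TA = "{(\<lambda>\<omega> (i::nat). T i \<omega>) -` A \<inter> space M | A. A \<in> sets (PiM UNIV (\<lambda>_. borel))}"
    let ?NB = "{(\<lambda>\<omega> (t::real). N t \<omega>) -` B \<inter> space M | B.
              B \<in> sets (PiM UNIV (\<lambda>_. count_space (UNIV :: nat set)))}"
    have H: "indep_set ?TA ?NB" using assms(12) .
    have sub1: "?A \<subseteq> ?TA"
    proof
      fix X assume "X \<in> ?A"
      then obtain A where A: "A \<in> sets borel" "X = S -` A \<inter> space M" by auto
      have g: "(\<lambda>x. \<Sum>i<z. x i :: real) \<in> borel_measurable (PiM UNIV (\<lambda>_::nat. borel))" by measurable
      have "X = (\<lambda>\<omega> (i::nat). T i \<omega>) -` ((\<lambda>x. \<Sum>i<z. x i) -` A \<inter> space (PiM UNIV (\<lambda>_::nat. borel))) \<inter> space M"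
        using A by (auto simp: S_def space_PiM)
      moreover have "(\<lambda>x. \<Sum>i<z. x i) -` A \<inter> space (PiM UNIV (\<lambda>_::nat. borel)) \<in> sets (PiM UNIV (\<lambda>_. borel))"
        using measurable_sets[OF g A(1)] .
      ultimately show "X \<in> ?TA" by blast
    qed
    have sub2: "?B \<subseteq> ?NB"
    proof
      fix X assume "X \<in> ?B"
      then obtain A where A: "A \<in> sets P" "X = Y n -` A \<inter> space M" by auto
      have g: "(\<lambda>f (j::nat). f (real j / 2^n) :: nat) \<in> measurable (PiM UNIV (\<lambda>_::real. count_space UNIV)) P"
        unfolding P_def
        by (rule measurable_PiM_single') (auto simp: space_PiM)
      have "X = (\<lambda>\<omega> (t::real). N t \<omega>) -` ((\<lambda>f (j::nat). f (real j / 2^n)) -` A \<inter> space (PiM UNIV (\<lambda>_::real. count_space (UNIV::nat set)))) \<inter> space M"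
        using A by (auto simp: Y_def space_PiM)
      moreover have "(\<lambda>f (j::nat). f (real j / 2^n)) -` A \<inter> space (PiM UNIV (\<lambda>_::real. count_space (UNIV::nat set))) \<in> sets (PiM UNIV (\<lambda>_. count_space UNIV))"
        using measurable_sets[OF g A(1)] .
      ultimately show "X \<in> ?NB" by blast
    qed
    have Hd: "?TA \<subseteq> events \<and> ?NB \<subseteq> events \<and> (\<forall>a\<in>?TA. \<forall>b\<in>?NB. prob (a \<inter> b) = prob a * prob b)"
      using indep_sets2_eq[THEN iffD1, OF H] .
    have indA: "prob (a \<inter> b) = prob a * prob b" if "a \<in> ?A" "b \<in> ?B" for a b
    proof -
      have "a \<in> ?TA" using subsetD[OF sub1 that(1)] .
      moreover have "b \<in> ?NB" using subsetD[OF sub2 that(2)] .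
      ultimately show ?thesis using Hd by simp
    qed
    have XY: "(\<lambda>\<omega>. (S \<omega>, Y n \<omega>)) \<in> measurable M (borel \<Otimes>\<^sub>M P)"
      using Smeas Ymeas by (rule measurable_Pair)
    interpret X: prob_space "distr M borel S" by (rule prob_space_distr) (rule Smeas)
    interpret Y: prob_space "distr M P (Y n)" by (rule prob_space_distr) (rule Ymeas)
    show ?thesis
    proof (rule pair_measure_eqI)
      show "sigma_finite_measure (distr M borel S)" ..
      show "sigma_finite_measure (distr M P (Y n))" ..
      show "sets (distr M borel S \<Otimes>\<^sub>M distr M P (Y n)) = sets (distr M (borel \<Otimes>\<^sub>M P) (\<lambda>\<omega>. (S \<omega>, Y n \<omega>)))"
        by simp
      fix A B assume A: "A \<in> sets (distr M borel S)" and B: "B \<in> sets (distr M P (Y n))"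
      have "emeasure (distr M (borel \<Otimes>\<^sub>M P) (\<lambda>\<omega>. (S \<omega>, Y n \<omega>))) (A \<times> B)
          = emeasure M ((\<lambda>\<omega>. (S \<omega>, Y n \<omega>)) -` (A \<times> B) \<inter> space M)"
        using A B by (intro emeasure_distr[OF XY]) auto
      also have "(\<lambda>\<omega>. (S \<omega>, Y n \<omega>)) -` (A \<times> B) \<inter> space M = (S -` A \<inter> space M) \<inter> (Y n -` B \<inter> space M)"
        by auto
      also have "emeasure M \<dots> = emeasure M (S -` A \<inter> space M) * emeasure M (Y n -` B \<inter> space M)"
      proof -
        have "S -` A \<inter> space M \<in> ?A" "Y n -` B \<inter> space M \<in> ?B" using A B by auto
        then have "prob ((S -` A \<inter> space M) \<inter> (Y n -` B \<inter> space M)) = prob (S -` A \<inter> space M) * prob (Y n -` B \<inter> space M)"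
          by (rule indA)
        then show ?thesis by (simp add: emeasure_eq_measure measure_nonneg ennreal_mult)
      qed
      also have "\<dots> = emeasure (distr M borel S) A * emeasure (distr M P (Y n)) B"
        using A B Smeas Ymeas by (simp add: emeasure_distr)
      finally show "emeasure (distr M borel S) A * emeasure (distr M P (Y n)) B = emeasure (distr M (borel \<Otimes>\<^sub>M P) (\<lambda>\<omega>. (S \<omega>, Y n \<omega>))) (A \<times> B)"
        by simp
    qed
  qed
  have Fnn: "0 \<le> F k t" if "0 \<le> t" for k t
    using Ndist[OF that, of k] by (metis measure_nonneg)
  have Fle1: "F k t \<le> 1" if "0 \<le> t" for k t
    using Ndist[OF that, of k] by (metis prob_le_1)
  have dn0: "0 \<le> dn n s" for n s unfolding dn_def by simp
  have Fmeas: "F k \<in> borel_measurable borel" for k unfolding F_def by measurable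
  have dnmeas: "dn n \<in> borel_measurable borel" for n unfolding dn_def by measurable
  have Fdnmeas: "(\<lambda>s. F k (dn n s)) \<in> borel_measurable borel" for k n
    using measurable_comp[OF dnmeas Fmeas] by (simp add: comp_def)
  have Fdnint: "integrable D (\<lambda>s. F k (dn n s))" for k n
    by (rule D.integrable_const_bound[where B=1]) (auto simp: D_def Fdnmeas dn0 Fnn Fle1)
  have key: "measure M {\<omega>\<in>space M. N (dn n (S \<omega>)) \<omega> = k} = (\<integral>s. F k (dn n s) \<partial>D)" for n k
  proof -
    define g where "g = (\<lambda>x::real \<times> (nat \<Rightarrow> nat). snd x (nat \<lceil>2^n * fst x\<rceil>))"
    have gmeas: "g \<in> measurable (borel \<Otimes>\<^sub>M P) (count_space UNIV)"
      unfolding g_def P_def by measurable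
    define G where "G = g -` {k} \<inter> space (borel \<Otimes>\<^sub>M P)"
    have Gs: "G \<in> sets (borel \<Otimes>\<^sub>M P)" unfolding G_def using measurable_sets[OF gmeas] by simp
    have XY: "(\<lambda>\<omega>. (S \<omega>, Y n \<omega>)) \<in> measurable M (borel \<Otimes>\<^sub>M P)"
      using Smeas Ymeas by (rule measurable_Pair)
    have Eeq: "{\<omega>\<in>space M. N (dn n (S \<omega>)) \<omega> = k} = (\<lambda>\<omega>. (S \<omega>, Y n \<omega>)) -` G \<inter> space M"
      by (auto simp: G_def g_def Y_def dn_def space_pair_measure P_def space_PiM)
    interpret Yp: prob_space "distr M P (Y n)" by (rule prob_space_distr) (rule Ymeas)
    have inner: "emeasure (distr M P (Y n)) (Pair s -` G) = ennreal (F k (dn n s))" for s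
    proof -
      have Ps: "Pair s -` G \<in> sets P" using sets_Pair1[OF Gs] .
      have "emeasure (distr M P (Y n)) (Pair s -` G) = emeasure M (Y n -` (Pair s -` G) \<inter> space M)"
        using Ps Ymeas by (simp add: emeasure_distr)
      also have "Y n -` (Pair s -` G) \<inter> space M = {\<omega>\<in>space M. N (dn n s) \<omega> = k}"
        by (auto simp: G_def g_def Y_def dn_def space_pair_measure P_def space_PiM)
      also have "emeasure M \<dots> = ennreal (F k (dn n s))"
        using Ndist[OF dn0] by (simp add: emeasure_eq_measure)
      finally show ?thesis .
    qed
    have "emeasure M {\<omega>\<in>space M. N (dn n (S \<omega>)) \<omega> = k}
        = emeasure (distr M (borel \<Otimes>\<^sub>M P) (\<lambda>\<omega>. (S \<omega>, Y n \<omega>))) G"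
      unfolding Eeq using Gs XY by (simp add: emeasure_distr)
    also have "\<dots> = emeasure (distr M borel S \<Otimes>\<^sub>M distr M P (Y n)) G"
      by (simp add: prodeq)
    also have "\<dots> = (\<integral>\<^sup>+ s. emeasure (distr M P (Y n)) (Pair s -` G) \<partial>D)"
      unfolding D_def
      by (rule Yp.emeasure_pair_measure_alt) (simp add: Gs)
    also have "\<dots> = (\<integral>\<^sup>+ s. ennreal (F k (dn n s)) \<partial>D)"
      by (simp add: inner)
    also have "\<dots> = ennreal (\<integral>s. F k (dn n s) \<partial>D)"
      by (rule nn_integral_eq_integral[OF Fdnint]) (simp add: Fnn dn0)
    finally have "ennreal (measure M {\<omega>\<in>space M. N (dn n (S \<omega>)) \<omega> = k}) = ennreal (\<integral>s. F k (dn n s) \<partial>D)"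
      by (simp add: emeasure_eq_measure)
    moreover have "0 \<le> (\<integral>s. F k (dn n s) \<partial>D)" by (rule Bochner_Integration.integral_nonneg) (simp add: Fnn dn0)
    ultimately show ?thesis by simp
  qed
  have evt: "eventually (\<lambda>n. N (dn n (S \<omega>)) \<omega> = N (S \<omega>) \<omega>) sequentially"
    if "\<omega> \<in> space M" "0 \<le> S \<omega>" for \<omega>
    unfolding dn_def by (rule rc_eventually[OF Nmono[OF that(1)] Nrc[OF that(1)] that(2)])
  have Nneg: "N (S \<omega>) \<omega> = 0" if "\<omega> \<in> space M" "S \<omega> < 0" for \<omega>
    using monoD[OF Nmono[OF that(1)], of "S \<omega>" 0] that N0[OF that(1)] by simp
  have dnSmeas: "(\<lambda>\<omega>. N (dn n (S \<omega>)) \<omega>) \<in> measurable M (count_space UNIV)" for n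
  proof -
    have g: "(\<lambda>\<omega>. nat \<lceil>2^n * S \<omega>\<rceil>) \<in> measurable M (count_space UNIV)"
      using Smeas by measurable
    have "(\<lambda>\<omega>. (\<lambda>j \<omega>. N (real j / 2^n) \<omega>) (nat \<lceil>2^n * S \<omega>\<rceil>) \<omega>) \<in> measurable M (count_space UNIV)"
      by (rule measurable_compose_countable[OF _ g]) (rule Nmeas)
    then show ?thesis by (simp add: dn_def)
  qed
  have NSreal: "(\<lambda>\<omega>. real (N (S \<omega>) \<omega>)) \<in> borel_measurable M"
  proof (rule borel_measurable_LIMSEQ_real)
    show "(\<lambda>\<omega>. if S \<omega> < 0 then 0 else real (N (dn i (S \<omega>)) \<omega>)) \<in> borel_measurable M" for i
      using Smeas dnSmeas[of i] by measurable
    fix \<omega> assume w: "\<omega> \<in> space M"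
    show "(\<lambda>i. if S \<omega> < 0 then 0 else real (N (dn i (S \<omega>)) \<omega>)) \<longlonglongrightarrow> real (N (S \<omega>) \<omega>)"
    proof (cases "S \<omega> < 0")
      case True then show ?thesis using Nneg[OF w] by simp
    next
      case False
      then have "eventually (\<lambda>i. (if S \<omega> < 0 then 0 else real (N (dn i (S \<omega>)) \<omega>)) = real (N (S \<omega>) \<omega>)) sequentially"
        using evt[OF w] by (auto elim: eventually_mono)
      then show ?thesis by (rule tendsto_eventually)
    qed
  qed
  have NSmeas: "(\<lambda>\<omega>. N (S \<omega>) \<omega>) \<in> measurable M (count_space UNIV)"
  proof (subst measurable_count_space_eq2_countable, intro conjI ballI)
    fix a :: nat
    have "(\<lambda>\<omega>. real (N (S \<omega>) \<omega>)) -` {real a} \<inter> space M \<in> sets M"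
      by (rule measurable_sets[OF NSreal]) simp
    moreover have "(\<lambda>\<omega>. real (N (S \<omega>) \<omega>)) -` {real a} \<inter> space M = (\<lambda>\<omega>. N (S \<omega>) \<omega>) -` {a} \<inter> space M"
      by auto
    ultimately show "(\<lambda>\<omega>. N (S \<omega>) \<omega>) -` {a} \<inter> space M \<in> sets M" by simp
  qed auto
  define Ek where "Ek = (\<lambda>n k. {\<omega>\<in>space M. N (dn n (S \<omega>)) \<omega> = k})"
  define E where "E = (\<lambda>k. {\<omega>\<in>space M. N (S \<omega>) \<omega> = k})"
  have Eks: "Ek n k \<in> sets M" for n k
  proof -
    have "(\<lambda>\<omega>. N (dn n (S \<omega>)) \<omega>) -` {k} \<inter> space M \<in> sets M"
      by (rule measurable_sets[OF dnSmeas]) simp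
    moreover have "(\<lambda>\<omega>. N (dn n (S \<omega>)) \<omega>) -` {k} \<inter> space M = Ek n k" unfolding Ek_def by auto
    ultimately show ?thesis by simp
  qed
  have Es: "E k \<in> sets M" for k
  proof -
    have "(\<lambda>\<omega>. N (S \<omega>) \<omega>) -` {k} \<inter> space M \<in> sets M"
      by (rule measurable_sets[OF NSmeas]) simp
    moreover have "(\<lambda>\<omega>. N (S \<omega>) \<omega>) -` {k} \<inter> space M = E k" unfolding E_def by auto
    ultimately show ?thesis by simp
  qed
  have lim1: "(\<lambda>n. measure M (Ek n k)) \<longlonglongrightarrow> measure M (E k)" for k
  proof -
    have "(\<lambda>n. integral\<^sup>L M (indicator (Ek n k) :: 'a \<Rightarrow> real)) \<longlonglongrightarrow> integral\<^sup>L M (indicator (E k))"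
    proof (rule integral_dominated_convergence[where w="\<lambda>_. 1"])
      show "indicator (E k) \<in> borel_measurable M" using Es by measurable
      show "indicator (Ek n k) \<in> borel_measurable M" for n using Eks by measurable
      show "integrable M (\<lambda>_. 1::real)" by simp
      show "AE x in M. norm (indicator (Ek n k) x :: real) \<le> 1" for n
        by (auto intro!: AE_I2 split: split_indicator)
      show "AE x in M. (\<lambda>n. indicator (Ek n k) x :: real) \<longlonglongrightarrow> indicator (E k) x"
        using Spos AE_space
      proof eventually_elim
        case (elim \<omega>)
        have "eventually (\<lambda>n. (indicator (Ek n k) \<omega> :: real) = indicator (E k) \<omega>) sequentially"
          using evt[OF elim(2) elim(1)] by eventually_elim (auto simp: Ek_def E_def split: split_indicator)
        then show ?case by (rule tendsto_eventually)
      qed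
    qed
    then show ?thesis using Eks Es by (simp add: emeasure_eq_measure)
  qed
  have Dpos: "AE s in D. 0 \<le> s"
    unfolding D_eq by (subst AE_density) (auto simp: erlang_density_def intro!: AE_I2)
  have lim2: "(\<lambda>n. \<integral>s. F k (dn n s) \<partial>D) \<longlonglongrightarrow> (\<integral>s. F k s \<partial>D)" for k
  proof (rule integral_dominated_convergence[where w="\<lambda>_. 1"])
    show "F k \<in> borel_measurable D" unfolding D_def using Fmeas by simp
    show "(\<lambda>s. F k (dn n s)) \<in> borel_measurable D" for n unfolding D_def using Fdnmeas by simp
    show "integrable D (\<lambda>_. 1::real)" by simp
    show "AE x in D. norm (F k (dn n x)) \<le> 1" for n
      by (auto intro!: AE_I2 simp: Fnn dn0 Fle1)
    show "AE x in D. (\<lambda>n. F k (dn n x)) \<longlonglongrightarrow> F k x"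
      using Dpos
    proof eventually_elim
      case (elim s)
      have c: "isCont (F k) s" unfolding F_def by (intro continuous_intros) simp
      show ?case unfolding dn_def by (rule isCont_tendsto_compose[OF c dn_tendsto[OF elim]])
    qed
  qed
  have Pk: "measure M (E k) = real ((k + z - 1) choose k) * p^z * q^k" for k
  proof -
    have "measure M (E k) = (\<integral>s. F k s \<partial>D)"
      using LIMSEQ_unique[OF lim1[of k], unfolded Ek_def key] lim2[of k] by simp
    also have "\<dots> = (LINT s|lborel. erlang_density (z-1) \<alpha> s * F k s)"
      unfolding D_eq by (subst integral_density) (auto simp: assms(2) less_imp_le Fmeas)
    also have "\<dots> = real ((k + z - 1) choose k) * p^z * q^k"
      unfolding F_def using erlang_poisson_integral[OF assms(2) assms(3) assms(13), of k] assms(7,8) by simp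
    finally show ?thesis .
  qed
  have ppos: "0 < p" using assms(5,6) by simp
  have Ueq: "{\<omega>\<in>space M. N (\<Sum>i<z. T i \<omega>) \<omega> \<ge> z} = space M - (\<Union>k\<in>{..<z}. E k)"
    unfolding E_def S_def by auto
  have Usum: "measure M (\<Union>k\<in>{..<z}. E k) = (\<Sum>k<z. measure M (E k))"
    by (rule finite_measure_finite_Union) (use Es in \<open>auto simp: disjoint_family_on_def E_def\<close>)
  have Ge: "measure M {\<omega>\<in>space M. N (\<Sum>i<z. T i \<omega>) \<omega> \<ge> z} = 1 - (\<Sum>k<z. measure M (E k))"
    unfolding Ueq by (subst prob_compl) (auto simp: Es Usum)
  have trm: "real ((k + z - 1) choose k) * p^z * q^k * (q / p) ^ (z - k) = real ((k + z - 1) choose k) * q^z * p^k"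
    if "k < z" for k
  proof -
    have "p^z = p^k * p^(z-k)" "q^z = q^k * q^(z-k)" using that by (simp_all add: power_add[symmetric])
    then show ?thesis using ppos by (simp add: power_divide field_simps)
  qed
  have "attack_prob M T N p q z = 1 - (\<Sum>k<z. measure M (E k)) + (\<Sum>k<z. measure M (E k) * (q / p) ^ (z - k))"
    unfolding attack_prob_def Ge by (simp add: E_def S_def)
  also have "\<dots> = 1 - (\<Sum>k<z. real ((k + z - 1) choose k) * p^z * q^k) + (\<Sum>k<z. real ((k + z - 1) choose k) * q^z * p^k)"
    by (simp only: Pk) (rule arg_cong2[where f="(+)"], simp, rule sum.cong, simp, rule trm, simp)
  also have "\<dots> = 1 - ((\<Sum>k<z. real ((k + z - 1) choose k) * p^z * q^k) - (\<Sum>k<z. real ((k + z - 1) choose k) * q^z * p^k))"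
    by simp
  also have "(\<Sum>k<z. real ((k + z - 1) choose k) * p^z * q^k) - (\<Sum>k<z. real ((k + z - 1) choose k) * q^z * p^k)
      = (\<Sum>k<z. (p ^ z * q ^ k - q ^ z * p ^ k) * real ((k + z - 1) choose k))"
    unfolding sum_subtractf[symmetric] by (rule sum.cong) (simp_all add: algebra_simps)
  finally show ?thesis .
qed
end
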